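(* Let $\Delta$ be a finite set of defaults such that $\Delta^\rightarrow$ is consistent, and suppose $\Delta$ has Z-partition $(\Delta_0,\ldots,\Delta_n)$. Then for all $\theta,\phi\in L$: $\theta\mid\!\sim^\Delta_{lex}\phi$ if and only if $\theta\mid\!\sim_{\vec{\mathcal R}}\phi$, where $\vec{\mathcal R}=(\cdots((\vec{\mathcal U}^\emptyset*\vec{\mathcal U}^{\Delta^\rightarrow_0})*\vec{\mathcal U}^{\Delta^\rightarrow_1})*\cdots)*\vec{\mathcal U}^{\Delta^\rightarrow_n}$.
   Context: $L$ is a propositional language built from a finite set of propositional variables with the connectives $\neg,\wedge,\vee,\rightarrow,\top,\bot$; $W$ is the finite set of propositional worlds. For $\theta\in L$, $S_\theta=\{w\in W\mid w\models\theta\}$; $E\models\phi$ means $\bigcap_{\theta\in E}S_\theta\subseteq S_\phi$; $E$ is consistent iff $E\not\models\bot$. For $w\in W$ and $E\subseteq L$, $\mathrm{sent}_E(w)=\{\theta\in E\mid w\models\theta\}$. Defaults: a default is an expression $\lambda\Rightarrow\chi$ with $\lambda,\chi\in L$. For a set $\Gamma$ of defaults, $\Gamma^\rightarrow=\{\lambda\rightarrow\chi\mid\lambda\Rightarrow\chi\in\Gamma\}$. A default $\lambda\Rightarrow\chi$ is tolerated by $\Gamma$ iff $\{\lambda\wedge\chi\}\cup\Gamma^\rightarrow$ is consistent. The Z-partition of $\Delta$ is obtained by letting $\Delta_0$ be the set of defaults in $\Delta$ tolerated by $\Delta$, and, for $i\ge1$, $\Delta_i$ the set of defaults in $\Delta\setminus(\Delta_0\cup\cdots\cup\Delta_{i-1})$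 tolerated by $\Delta\setminus(\Delta_0\cup\cdots\cup\Delta_{i-1})$, stopping at the first $n$ with $\Delta_0\cup\cdots\cup\Delta_n=\Delta$ (the Z-partition exists when each step yields a nonempty set until $\Delta$ is exhausted). Lexicographic closure: for $A,B\subseteq\Delta$ let $A_i=A\cap\Delta_i$, $B_i=B\cap\Delta_i$; $A\ll_{lex}B$ iff there is $i$ with $|A_i|<|B_i|$ and $|A_j|=|B_j|$ for all $j>i$. Then $\theta\mid\!\sim^\Delta_{lex}\phi$ iff for every $\Gamma\subseteq\Delta$ such that $\Gamma^\rightarrow\cup\{\theta\}$ is consistent and $\Gamma$ is $\ll_{lex}$-maximal among such subsets (no such $\Gamma'$ with $\Gamma\ll_{lex}\Gamma'$), we have $\Gamma^\rightarrow\cup\{\theta\}\models\phi$. Sequences: finite sequences $\vec{\mathcal U}=(\mathcal U_0,\ldots,\mathcal U_k)$ of mutually disjoint subsets of $W$ (components may be empty, possibly repeatedly). $\mathrm{rank}^{\vec{\mathcal U}}(\theta)$ is the least $i$ with $\mathcal U_i\cap S_\theta\neq\emptyset$, $\infty$ if none ($i<\infty$ for all integers $i$). $\theta\mid\!\sim_{\vec{\mathcal U}}\phi$ iff $\mathrm{rank}^{\vec{\mathcal U}}(\theta)<\mathrm{rank}^{\vec{\mathcal U}}(\theta\wedge\neg\phi)$ or $\mathrm{rank}^{\vec{\mathcal U}}(\theta)=\infty$. $\vec{\mathcal U}$ is full iff $\bigcup_i\mathcal U_i=W$, empty iff $\bigcup_i\mathcal U_i=\emptyset$; $\Upsilon$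 is the set of sequences which are full or empty. Sequence revision: for $\vec{\mathcal U}=(\mathcal U_0,\ldots,\mathcal U_k)$, $\vec{\mathcal V}=(\mathcal V_0,\ldots,\mathcal V_m)$ in $\Upsilon$, if $\vec{\mathcal U}$ is full then $\vec{\mathcal U}*\vec{\mathcal V}=(\mathcal U_0\cap\mathcal V_0,\ldots,\mathcal U_k\cap\mathcal V_0,\ \mathcal U_0\cap\mathcal V_1,\ldots,\mathcal U_k\cap\mathcal V_1,\ \ldots,\ \mathcal U_0\cap\mathcal V_m,\ldots,\mathcal U_k\cap\mathcal V_m)$; otherwise $\vec{\mathcal U}*\vec{\mathcal V}=\vec{\mathcal V}$. For finite $E\subseteq L$ with $|E|=k$: $\mathcal U^E_i=\{w\in W\mid|\mathrm{sent}_E(w)|=k-i\}$ ($i=0,\ldots,k$) if $E\not\models\bot$, and $\mathcal U^E_i=\emptyset$ otherwise; $\vec{\mathcal U}^E=(\mathcal U^E_0,\ldots,\mathcal U^E_k)$. In particular $\vec{\mathcal U}^\emptyset=(W)$. *)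

theory Defs
  imports Main "HOL-Library.Extended_Nat"
begin

datatype 'v form =
    Var 'v
  | Neg "'v form"
  | Conj "'v form" "'v form"
  | Disj "'v form" "'v form"
  | Imp "'v form" "'v form"
  | Top
  | Bot

text \<open>Worlds are valuations; with a finite variable type the set W = UNIV of worlds is finite.\<close>
type_synonym 'v world = "'v \<Rightarrow> bool"

fun sat :: "'v world \<Rightarrow> 'v form \<Rightarrow> bool" where
  "sat w (Var p) = w p"
| "sat w (Neg a) = (\<not> sat w a)"
| "sat w (Conj a b) = (sat w a \<and> sat w b)"
| "sat w (Disj a b) = (sat w a \<or> sat w b)"
| "sat w (Imp a b) = (sat w a \<longrightarrow> sat w b)"
| "sat w Top = True"
| "sat w Bot = False"

definition Sof :: "'v form \<Rightarrow> 'v world set" where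
  "Sof \<theta> = {w. sat w \<theta>}"

definition entails :: "'v form set \<Rightarrow> 'v form \<Rightarrow> bool" where
  "entails E \<phi> \<longleftrightarrow> (\<Inter>\<theta>\<in>E. Sof \<theta>) \<subseteq> Sof \<phi>"

definition consistent :: "'v form set \<Rightarrow> bool" where
  "consistent E \<longleftrightarrow> \<not> entails E Bot"

definition sent :: "'v form set \<Rightarrow> 'v world \<Rightarrow> 'v form set" where
  "sent E w = {\<theta>\<in>E. sat w \<theta>}"

type_synonym 'v default = "'v form \<times> 'v form"

definition imps :: "'v default set \<Rightarrow> 'v form set" where
  "imps \<Gamma> = (\<lambda>(l, c). Imp l c) ` \<Gamma>"

definition tolerated :: "'v default \<Rightarrow> 'v default set \<Rightarrow> bool" where
  "tolerated d \<Gamma> \<longleftrightarrow> consistent ({Conj (fst d) (snd d)} \<union> imps \<Gamma>)"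

definition prefix_union :: "'a set list \<Rightarrow> nat \<Rightarrow> 'a set" where
  "prefix_union Ps i = (\<Union>j<i. Ps ! j)"

definition is_Zpartition :: "'v default set \<Rightarrow> 'v default set list \<Rightarrow> bool" where
  "is_Zpartition \<Delta> Ps \<longleftrightarrow>
     Ps \<noteq> [] \<and>
     (\<forall>i<length Ps. Ps ! i =
        {d \<in> \<Delta> - prefix_union Ps i. tolerated d (\<Delta> - prefix_union Ps i)}) \<and>
     (\<forall>i<length Ps. i \<noteq> 0 \<longrightarrow> Ps ! i \<noteq> {}) \<and>
     prefix_union Ps (length Ps) = \<Delta> \<and>
     (\<forall>i<length Ps - 1. prefix_union Ps (Suc i) \<noteq> \<Delta>)"

definition lex_less :: "'v default set list \<Rightarrow> 'v default set \<Rightarrow> 'v default set \<Rightarrow> bool" where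
  "lex_less Ps A B \<longleftrightarrow>
     (\<exists>i<length Ps. card (A \<inter> Ps ! i) < card (B \<inter> Ps ! i) \<and>
        (\<forall>j. i < j \<and> j < length Ps \<longrightarrow> card (A \<inter> Ps ! j) = card (B \<inter> Ps ! j)))"

definition lex_cands :: "'v default set \<Rightarrow> 'v form \<Rightarrow> 'v default set set" where
  "lex_cands \<Delta> \<theta> = {\<Gamma>. \<Gamma> \<subseteq> \<Delta> \<and> consistent (imps \<Gamma> \<union> {\<theta>})}"

definition lex_entails ::
  "'v default set \<Rightarrow> 'v default set list \<Rightarrow> 'v form \<Rightarrow> 'v form \<Rightarrow> bool" where
  "lex_entails \<Delta> Ps \<theta> \<phi> \<longleftrightarrow>
     (\<forall>\<Gamma>\<in>lex_cands \<Delta> \<theta>.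
        (\<not> (\<exists>\<Gamma>'\<in>lex_cands \<Delta> \<theta>. lex_less Ps \<Gamma> \<Gamma>')) \<longrightarrow> entails (imps \<Gamma> \<union> {\<theta>}) \<phi>)"

type_synonym 'v wseq = "'v world set list"

definition rank :: "'v wseq \<Rightarrow> 'v form \<Rightarrow> enat" where
  "rank Us \<theta> =
     (if \<exists>i<length Us. Us ! i \<inter> Sof \<theta> \<noteq> {}
      then enat (LEAST i. i < length Us \<and> Us ! i \<inter> Sof \<theta> \<noteq> {})
      else \<infinity>)"

definition seq_entails :: "'v wseq \<Rightarrow> 'v form \<Rightarrow> 'v form \<Rightarrow> bool" where
  "seq_entails Us \<theta> \<phi> \<longleftrightarrow>
     rank Us \<theta> < rank Us (Conj \<theta> (Neg \<phi>)) \<or> rank Us \<theta> = \<infinity>"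

definition full :: "'v wseq \<Rightarrow> bool" where
  "full Us \<longleftrightarrow> \<Union>(set Us) = UNIV"

definition seq_rev :: "'v wseq \<Rightarrow> 'v wseq \<Rightarrow> 'v wseq" (infixl "\<star>" 70) where
  "seq_rev Us Vs = (if full Us then concat (map (\<lambda>V. map (\<lambda>U. U \<inter> V) Us) Vs) else Vs)"

definition Useq :: "'v form set \<Rightarrow> 'v wseq" where
  "Useq E = (let k = card E in
     map (\<lambda>i. if consistent E then {w. card (sent E w) = k - i} else {}) [0..<Suc k])"

end

theory Submission
  imports Defs
begin

definition satd :: "'v world \<Rightarrow> 'v default \<Rightarrow> bool" where
  "satd w d = sat w (Imp (fst d) (snd d))"

definition cnt :: "'v default set \<Rightarrow> 'v world \<Rightarrow> nat" where
  "cnt D w = card {d\<in>D. satd w d}"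

fun lexv :: "nat \<Rightarrow> (nat \<Rightarrow> nat) \<Rightarrow> (nat \<Rightarrow> nat) \<Rightarrow> bool" where
  "lexv 0 f g = False"
| "lexv (Suc n) f g = (f n < g n \<or> (f n = g n \<and> lexv n f g))"

lemma lexv_ex: "lexv n f g \<longleftrightarrow> (\<exists>i<n. f i < g i \<and> (\<forall>j. i < j \<and> j < n \<longrightarrow> f j = g j))"
proof (induction n)
  case 0
  then show ?case by simp
next
  case (Suc n)
  show ?case
  proof
    assume "lexv (Suc n) f g"
    then show "\<exists>i<Suc n. f i < g i \<and> (\<forall>j. i < j \<and> j < Suc n \<longrightarrow> f j = g j)"
      using Suc by (auto simp: less_Suc_eq)
  next
    assume "\<exists>i<Suc n. f i < g i \<and> (\<forall>j. i < j \<and> j < Suc n \<longrightarrow> f j = g j)"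
    then obtain i where i: "i < Suc n" "f i < g i" "\<forall>j. i < j \<and> j < Suc n \<longrightarrow> f j = g j" by blast
    show "lexv (Suc n) f g"
    proof (cases "i = n")
      case True then show ?thesis using i by simp
    next
      case False
      then have "i < n" using i by simp
      then have "f n = g n" using i by simp
      moreover have "lexv n f g" using Suc i \<open>i < n\<close> by auto
      ultimately show ?thesis by simp
    qed
  qed
qed

lemma lexv_cong: "(\<And>i. i < n \<Longrightarrow> f i = f' i) \<Longrightarrow> (\<And>i. i < n \<Longrightarrow> g i = g' i) \<Longrightarrow> lexv n f g = lexv n f' g'"
  by (induction n) auto

lemma lexv_mono: "(\<And>i. i < n \<Longrightarrow> g i \<le> h i) \<Longrightarrow> lexv n f g \<Longrightarrow> lexv n f h"
proof (induction n)
  case 0 then show ?case by simp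
next
  case (Suc n)
  have gh: "g n \<le> h n" using Suc.prems(1) by simp
  have ih: "lexv n f g \<Longrightarrow> lexv n f h" using Suc.IH Suc.prems(1) by simp
  show ?case using Suc.prems(2) gh ih by (auto simp: le_less)
qed

lemma lexv_strict: "(\<And>i. i < n \<Longrightarrow> f i \<le> g i) \<Longrightarrow> i < n \<Longrightarrow> f i < g i \<Longrightarrow> lexv n f g"
  by (induction n) (auto simp: less_Suc_eq le_less)

lemma concat_len: "length (concat (map (\<lambda>V. map (\<lambda>U. U \<inter> V) Us) Vs)) = length Vs * length Us"
  by (induction Vs) auto

lemma concat_nth: "i < length Vs \<Longrightarrow> p < length Us \<Longrightarrow>
   concat (map (\<lambda>V. map (\<lambda>U. U \<inter> V) Us) Vs) ! (i * length Us + p) = Us ! p \<inter> Vs ! i"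
proof (induction Vs arbitrary: i)
  case Nil then show ?case by simp
next
  case (Cons V Vs)
  show ?case
  proof (cases i)
    case 0 then show ?thesis using Cons by (simp add: nth_append)
  next
    case (Suc i')
    then show ?thesis using Cons by (simp add: nth_append)
  qed
qed

lemma mixed_less: "(p::nat) < L \<Longrightarrow> q < L \<Longrightarrow> (a * L + p < b * L + q) \<longleftrightarrow> (a < b \<or> (a = b \<and> p < q))"
proof -
  assume pq: "p < L" "q < L"
  have 1: "a * L + p < b * L + q" if "a < b"
  proof -
    have "Suc a * L \<le> b * L" using that by (intro mult_le_mono1) simp
    then show ?thesis using pq by simp
  qed
  have 2: "\<not> (a * L + p < b * L + q)" if "b < a"
  proof -
    have "Suc b * L \<le> a * L" using that by (intro mult_le_mono1) simp
    then show ?thesis using pq by simp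
  qed
  show ?thesis using 1 2 by (cases a b rule: linorder_cases) auto
qed

lemma imps_inj: "inj_on (\<lambda>(l, c). Imp l c) A"
  by (auto simp: inj_on_def)

lemma card_sent: "finite D \<Longrightarrow> card (sent (imps D) w) = cnt D w"
proof -
  assume "finite D"
  have "sent (imps D) w = imps {d\<in>D. satd w d}"
    by (auto simp: sent_def imps_def satd_def)
  then show ?thesis unfolding cnt_def imps_def
    by (simp add: card_image[OF imps_inj])
qed

lemma card_imps: "card (imps D) = card D"
  unfolding imps_def by (simp add: card_image[OF imps_inj])

lemma cnt_le: "finite D \<Longrightarrow> cnt D w \<le> card D"
  unfolding cnt_def by (intro card_mono) auto

lemma consistent_iff: "consistent E \<longleftrightarrow> (\<exists>w. \<forall>\<theta>\<in>E. sat w \<theta>)"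
  by (auto simp: consistent_def entails_def Sof_def)

lemma Useq_eq: "consistent (imps D) \<Longrightarrow> finite D \<Longrightarrow>
  Useq (imps D) = map (\<lambda>i. {w. cnt D w = card D - i}) [0..<Suc (card D)]"
  by (simp add: Useq_def card_imps card_sent Let_def del: upt_Suc)

lemma seq_lemma:
  assumes "\<forall>D\<in>set Ps. finite D \<and> consistent (imps D)"
  shows "\<exists>pos. (\<forall>w. pos w < length (foldl seq_rev [UNIV] (map (\<lambda>D. Useq (imps D)) Ps))) \<and>
     (\<forall>w p. p < length (foldl seq_rev [UNIV] (map (\<lambda>D. Useq (imps D)) Ps)) \<longrightarrow>
         (w \<in> (foldl seq_rev [UNIV] (map (\<lambda>D. Useq (imps D)) Ps)) ! p \<longleftrightarrow> p = pos w)) \<and>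
     (\<forall>w v. pos w < pos v \<longleftrightarrow> lexv (length Ps) (\<lambda>i. cnt (Ps!i) v) (\<lambda>i. cnt (Ps!i) w))"
  using assms
proof (induction Ps rule: rev_induct)
  case Nil
  show ?case by (rule exI[of _ "\<lambda>_. 0"]) simp
next
  case (snoc D Ps)
  define R where "R = foldl seq_rev [UNIV] (map (\<lambda>D. Useq (imps D)) Ps)"
  from snoc obtain pos where
    p1: "\<forall>w. pos w < length R" and
    p2: "\<forall>w p. p < length R \<longrightarrow> (w \<in> R ! p \<longleftrightarrow> p = pos w)" and
    p3: "\<forall>w v. pos w < pos v \<longleftrightarrow> lexv (length Ps) (\<lambda>i. cnt (Ps!i) v) (\<lambda>i. cnt (Ps!i) w)"
    unfolding R_def by auto
  have fD: "finite D" and cD: "consistent (imps D)" using snoc.prems by auto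
  define k where "k = card D"
  define L where "L = length R"
  define Vs where "Vs = Useq (imps D)"
  have Vs: "Vs = map (\<lambda>i. {w. cnt D w = k - i}) [0..<Suc k]"
    unfolding Vs_def k_def using Useq_eq[OF cD fD] .
  have full: "full R" unfolding full_def
  proof (intro set_eqI iffI)
    fix x assume "x \<in> (UNIV :: 'a world set)"
    have "x \<in> R ! pos x" using p1 p2 by simp
    then show "x \<in> \<Union> (set R)" using p1 by (meson UnionI nth_mem)
  qed simp
  have R': "foldl seq_rev [UNIV] (map (\<lambda>D. Useq (imps D)) (Ps @ [D]))
      = concat (map (\<lambda>V. map (\<lambda>U. U \<inter> V) R) Vs)"
    using full by (simp add: R_def[symmetric] Vs_def seq_rev_def)
  define pos' where "pos' w = (k - cnt D w) * L + pos w" for w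
  have lenR': "length (concat (map (\<lambda>V. map (\<lambda>U. U \<inter> V) R) Vs)) = Suc k * L"
    unfolding concat_len by (simp add: Vs L_def del: upt_Suc)
  have Lpos: "0 < L" using p1 L_def by (metis gr_zeroI less_nat_zero_code)
  have cle: "cnt D w \<le> k" for w using cnt_le[OF fD] k_def by simp
  have q1: "pos' w < Suc k * L" for w
  proof -
    have "pos' w < (k - cnt D w) * L + L" unfolding pos'_def using p1 L_def by simp
    also have "\<dots> = Suc (k - cnt D w) * L" by simp
    also have "\<dots> \<le> Suc k * L" by (intro mult_le_mono1) simp
    finally show ?thesis .
  qed
  have q2: "w \<in> concat (map (\<lambda>V. map (\<lambda>U. U \<inter> V) R) Vs) ! q \<longleftrightarrow> q = pos' w"
    if q: "q < Suc k * L" for w q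
  proof -
    have qd: "q div L < Suc k" using q Lpos by (simp add: div_less_iff_less_mult)
    have qm: "q mod L < L" using Lpos by simp
    have qq: "q = q div L * L + q mod L" by simp
    have "concat (map (\<lambda>V. map (\<lambda>U. U \<inter> V) R) Vs) ! q = R ! (q mod L) \<inter> Vs ! (q div L)"
      using concat_nth[of "q div L" Vs "q mod L" R] qd qm qq by (simp add: Vs L_def)
    also have "w \<in> \<dots> \<longleftrightarrow> q mod L = pos w \<and> cnt D w = k - q div L"
      using p2 qm qd by (simp add: Vs L_def nth_append del: upt_Suc)
    also have "\<dots> \<longleftrightarrow> q = pos' w"
    proof
      assume a: "q mod L = pos w \<and> cnt D w = k - q div L"
      then have "q div L = k - cnt D w" using qd cle[of w] by simp
      then show "q = pos' w" using a qq unfolding pos'_def by simp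
    next
      assume a: "q = pos' w"
      have pw: "pos w < L" using p1 L_def by simp
      have "q div L = k - cnt D w" using a pw unfolding pos'_def by simp
      moreover have "q mod L = pos w" using a pw unfolding pos'_def by simp
      ultimately show "q mod L = pos w \<and> cnt D w = k - q div L" using cle[of w] by simp
    qed
    finally show ?thesis .
  qed
  have q3: "pos' w < pos' v \<longleftrightarrow> lexv (length (Ps @ [D])) (\<lambda>i. cnt ((Ps @ [D])!i) v) (\<lambda>i. cnt ((Ps @ [D])!i) w)" for w v
  proof -
    have pw: "pos w < L" "pos v < L" using p1 L_def by auto
    have "pos' w < pos' v \<longleftrightarrow> (k - cnt D w < k - cnt D v \<or> (k - cnt D w = k - cnt D v \<and> pos w < pos v))"
      unfolding pos'_def using mixed_less[OF pw] .
    also have "\<dots> \<longleftrightarrow> (cnt D v < cnt D w \<or> (cnt D v = cnt D w \<and> pos w < pos v))"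
      using cle[of w] cle[of v] by auto
    also have "\<dots> \<longleftrightarrow> lexv (length (Ps @ [D])) (\<lambda>i. cnt ((Ps @ [D])!i) v) (\<lambda>i. cnt ((Ps @ [D])!i) w)"
    proof -
      have "lexv (length Ps) (\<lambda>i. cnt ((Ps @ [D])!i) v) (\<lambda>i. cnt ((Ps @ [D])!i) w)
          = lexv (length Ps) (\<lambda>i. cnt (Ps!i) v) (\<lambda>i. cnt (Ps!i) w)"
        by (rule lexv_cong) (auto simp: nth_append)
      then show ?thesis using p3 by simp
    qed
    finally show ?thesis .
  qed
  show ?case
    apply (rule exI[of _ pos'])
    using q1 q2 q3 R' lenR' by simp
qed

lemma rank_pos:
  assumes p1: "\<forall>w. pos w < length R"
    and p2: "\<forall>w p. p < length R \<longrightarrow> (w \<in> R ! p \<longleftrightarrow> p = pos w)"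
  shows "rank R \<chi> = (if Sof \<chi> = {} then \<infinity> else enat (LEAST p. \<exists>w\<in>Sof \<chi>. p = pos w))"
proof -
  have c: "(i < length R \<and> R ! i \<inter> Sof \<chi> \<noteq> {}) \<longleftrightarrow> (\<exists>w\<in>Sof \<chi>. i = pos w)" for i
    using p1 p2 by auto
  have e: "(\<exists>i<length R. R ! i \<inter> Sof \<chi> \<noteq> {}) \<longleftrightarrow> Sof \<chi> \<noteq> {}"
    using c by blast
  show ?thesis unfolding rank_def using e c by simp
qed

lemma seq_pos:
  assumes p1: "\<forall>w. pos w < length R"
    and p2: "\<forall>w p. p < length R \<longrightarrow> (w \<in> R ! p \<longleftrightarrow> p = pos w)"
  shows "seq_entails R \<theta> \<phi> \<longleftrightarrow> (\<forall>w\<in>Sof \<theta>. (\<forall>v\<in>Sof \<theta>. pos w \<le> pos v) \<longrightarrow> sat w \<phi>)"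
proof (cases "Sof \<theta> = {}")
  case True
  then show ?thesis unfolding seq_entails_def using rank_pos[OF p1 p2, of \<theta>] by simp
next
  case False
  define m where "m = (LEAST p. \<exists>w\<in>Sof \<theta>. p = pos w)"
  obtain w0 where w0: "w0 \<in> Sof \<theta>" "pos w0 = m"
  proof -
    have ex: "\<exists>p. \<exists>w\<in>Sof \<theta>. p = pos w" using False by blast
    have "\<exists>w\<in>Sof \<theta>. m = pos w" unfolding m_def by (rule LeastI_ex[OF ex])
    then show ?thesis using that by metis
  qed
  have mle: "\<And>v. v \<in> Sof \<theta> \<Longrightarrow> m \<le> pos v" unfolding m_def by (auto intro: Least_le)
  have rt: "rank R \<theta> = enat m" using rank_pos[OF p1 p2, of \<theta>] False m_def by simp
  define T where "T = Sof (Conj \<theta> (Neg \<phi>))"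
  have T: "T = {w\<in>Sof \<theta>. \<not> sat w \<phi>}" unfolding T_def Sof_def by auto
  have minchar: "(\<forall>v\<in>Sof \<theta>. pos w \<le> pos v) \<longleftrightarrow> pos w = m" if "w \<in> Sof \<theta>" for w
  proof
    assume "\<forall>v\<in>Sof \<theta>. pos w \<le> pos v"
    then have "pos w \<le> m" using w0 by metis
    then show "pos w = m" using mle[OF that] by simp
  next
    assume "pos w = m"
    then show "\<forall>v\<in>Sof \<theta>. pos w \<le> pos v" using mle by simp
  qed
  show ?thesis
  proof (cases "T = {}")
    case True
    then have "rank R (Conj \<theta> (Neg \<phi>)) = \<infinity>" using rank_pos[OF p1 p2] T_def by simp
    then show ?thesis unfolding seq_entails_def using rt True T by auto
  next
    case TF: False
    define m' where "m' = (LEAST p. \<exists>w\<in>T. p = pos w)"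
    obtain u where u: "u \<in> T" "pos u = m'"
    proof -
      have ex: "\<exists>p. \<exists>w\<in>T. p = pos w" using TF by blast
      have "\<exists>w\<in>T. m' = pos w" unfolding m'_def by (rule LeastI_ex[OF ex])
      then show ?thesis using that by metis
    qed
    have m'le: "\<And>v. v \<in> T \<Longrightarrow> m' \<le> pos v" unfolding m'_def by (auto intro: Least_le)
    have rt': "rank R (Conj \<theta> (Neg \<phi>)) = enat m'" using rank_pos[OF p1 p2] TF m'_def T_def by simp
    have "seq_entails R \<theta> \<phi> \<longleftrightarrow> m < m'" unfolding seq_entails_def rt rt' by simp
    also have "\<dots> \<longleftrightarrow> (\<forall>w\<in>Sof \<theta>. pos w = m \<longrightarrow> sat w \<phi>)"
    proof
      assume "m < m'"
      show "\<forall>w\<in>Sof \<theta>. pos w = m \<longrightarrow> sat w \<phi>"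
      proof (intro ballI impI)
        fix w assume w: "w \<in> Sof \<theta>" "pos w = m"
        show "sat w \<phi>"
        proof (rule ccontr)
          assume "\<not> sat w \<phi>"
          then have "w \<in> T" using T w by simp
          then have "m' \<le> pos w" by (rule m'le)
          then show False using w \<open>m < m'\<close> by simp
        qed
      qed
    next
      assume a: "\<forall>w\<in>Sof \<theta>. pos w = m \<longrightarrow> sat w \<phi>"
      have uS: "u \<in> Sof \<theta>" "\<not> sat u \<phi>" using u(1) T by auto
      have "m \<le> m'" using mle[OF uS(1)] u(2) by simp
      moreover have "m' \<noteq> m" using a uS u(2) by metis
      ultimately show "m < m'" by simp
    qed
    also have "\<dots> \<longleftrightarrow> (\<forall>w\<in>Sof \<theta>. (\<forall>v\<in>Sof \<theta>. pos w \<le> pos v) \<longrightarrow> sat w \<phi>)"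
      using minchar by blast
    finally show ?thesis .
  qed
qed

lemma lex_less_lexv: "lex_less Ps A B \<longleftrightarrow> lexv (length Ps) (\<lambda>i. card (A \<inter> Ps!i)) (\<lambda>i. card (B \<inter> Ps!i))"
  unfolding lex_less_def lexv_ex by simp

lemma all_imps: "(\<forall>x\<in>imps \<Gamma>. sat w x) \<longleftrightarrow> (\<forall>d\<in>\<Gamma>. satd w d)"
  by (simp add: imps_def satd_def case_prod_beta)

lemma cons_imps: "consistent (imps \<Gamma> \<union> {\<theta>}) \<longleftrightarrow> (\<exists>w. sat w \<theta> \<and> (\<forall>d\<in>\<Gamma>. satd w d))"
  unfolding consistent_iff by (simp add: all_imps conj_commute)

lemma lex_side:
  assumes fin: "finite \<Delta>" and cov: "(\<Union>i<length Ps. Ps ! i) = \<Delta>"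
  shows "lex_entails \<Delta> Ps \<theta> \<phi> \<longleftrightarrow>
    (\<forall>w\<in>Sof \<theta>. (\<forall>v\<in>Sof \<theta>. \<not> lex_less Ps {d\<in>\<Delta>. satd w d} {d\<in>\<Delta>. satd v d}) \<longrightarrow> sat w \<phi>)"
proof -
  define G where "G w = {d\<in>\<Delta>. satd w d}" for w
  have cands: "\<Gamma> \<in> lex_cands \<Delta> \<theta> \<longleftrightarrow> \<Gamma> \<subseteq> \<Delta> \<and> (\<exists>w\<in>Sof \<theta>. \<Gamma> \<subseteq> G w)" for \<Gamma>
  proof -
    have gsub: "\<Gamma> \<subseteq> \<Delta> \<Longrightarrow> (\<forall>d\<in>\<Gamma>. satd w d) \<longleftrightarrow> \<Gamma> \<subseteq> G w" for w
      unfolding G_def by (auto simp del: mem_Collect_eq)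
    have s: "sat w \<theta> \<longleftrightarrow> w \<in> Sof \<theta>" for w unfolding Sof_def by simp
    have "\<Gamma> \<in> lex_cands \<Delta> \<theta> \<longleftrightarrow> \<Gamma> \<subseteq> \<Delta> \<and> (\<exists>w. sat w \<theta> \<and> (\<forall>d\<in>\<Gamma>. satd w d))"
      unfolding lex_cands_def cons_imps by simp
    also have "\<dots> \<longleftrightarrow> \<Gamma> \<subseteq> \<Delta> \<and> (\<exists>w\<in>Sof \<theta>. \<Gamma> \<subseteq> G w)"
      using gsub s by meson
    finally show ?thesis .
  qed
  have Gc: "w \<in> Sof \<theta> \<Longrightarrow> G w \<in> lex_cands \<Delta> \<theta>" for w
  proof -
    assume w: "w \<in> Sof \<theta>"
    have "G w \<subseteq> \<Delta>" unfolding G_def by blast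
    then show ?thesis using cands[of "G w"] w by blast
  qed
  have strict: "lex_less Ps \<Gamma> (G w)" if sg: "\<Gamma> \<subseteq> G w" "\<Gamma> \<noteq> G w" for \<Gamma> w
  proof -
    obtain d where d: "d \<in> G w" "d \<notin> \<Gamma>" using sg by blast
    then have "d \<in> \<Delta>" unfolding G_def by simp
    then have "d \<in> (\<Union>i<length Ps. Ps ! i)" using cov by simp
    then obtain i where i: "i < length Ps" "d \<in> Ps ! i" by blast
    have fi: "finite (G w \<inter> Ps ! j)" for j using fin unfolding G_def by simp
    have "card (\<Gamma> \<inter> Ps ! i) < card (G w \<inter> Ps ! i)"
      using d i sg(1) fi[of i] by (intro psubset_card_mono) auto
    moreover have "card (\<Gamma> \<inter> Ps ! j) \<le> card (G w \<inter> Ps ! j)" for j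
      using sg(1) fi[of j] by (intro card_mono) auto
    ultimately show ?thesis unfolding lex_less_lexv using i by (intro lexv_strict) auto
  qed
  have mono: "lex_less Ps A \<Gamma> \<Longrightarrow> \<Gamma> \<subseteq> G v \<Longrightarrow> lex_less Ps A (G v)" for A \<Gamma> v
  proof -
    assume a: "lex_less Ps A \<Gamma>" "\<Gamma> \<subseteq> G v"
    have fi: "finite (G v \<inter> Ps ! j)" for j using fin unfolding G_def by simp
    have "card (\<Gamma> \<inter> Ps ! j) \<le> card (G v \<inter> Ps ! j)" for j
      using a(2) fi[of j] by (intro card_mono) auto
    then show ?thesis using a(1) unfolding lex_less_lexv by (rule lexv_mono)
  qed
  have "lex_entails \<Delta> Ps \<theta> \<phi> \<longleftrightarrow>
    (\<forall>w\<in>Sof \<theta>. (\<forall>v\<in>Sof \<theta>. \<not> lex_less Ps (G w) (G v)) \<longrightarrow> sat w \<phi>)"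
  proof
    assume LE: "lex_entails \<Delta> Ps \<theta> \<phi>"
    show "\<forall>w\<in>Sof \<theta>. (\<forall>v\<in>Sof \<theta>. \<not> lex_less Ps (G w) (G v)) \<longrightarrow> sat w \<phi>"
    proof (intro ballI impI)
      fix w assume w: "w \<in> Sof \<theta>" and mx: "\<forall>v\<in>Sof \<theta>. \<not> lex_less Ps (G w) (G v)"
      have "\<not> (\<exists>\<Gamma>'\<in>lex_cands \<Delta> \<theta>. lex_less Ps (G w) \<Gamma>')"
      proof
        assume "\<exists>\<Gamma>'\<in>lex_cands \<Delta> \<theta>. lex_less Ps (G w) \<Gamma>'"
        then obtain \<Gamma>' where g1: "\<Gamma>' \<in> lex_cands \<Delta> \<theta>" and g2: "lex_less Ps (G w) \<Gamma>'" by blast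
        from g1 obtain v where v: "v \<in> Sof \<theta>" "\<Gamma>' \<subseteq> G v" using cands[of \<Gamma>'] by blast
        have "lex_less Ps (G w) (G v)" using mono[OF g2 v(2)] .
        then show False using mx v(1) by blast
      qed
      then have "entails (imps (G w) \<union> {\<theta>}) \<phi>" using LE Gc[OF w] unfolding lex_entails_def by blast
      moreover have "w \<in> (\<Inter>x\<in>imps (G w) \<union> {\<theta>}. Sof x)"
        using w unfolding imps_def G_def Sof_def satd_def by auto
      ultimately show "sat w \<phi>" unfolding entails_def Sof_def by blast
    qed
  next
    assume R: "\<forall>w\<in>Sof \<theta>. (\<forall>v\<in>Sof \<theta>. \<not> lex_less Ps (G w) (G v)) \<longrightarrow> sat w \<phi>"
    show "lex_entails \<Delta> Ps \<theta> \<phi>" unfolding lex_entails_def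
    proof (intro ballI impI)
      fix \<Gamma> assume \<Gamma>: "\<Gamma> \<in> lex_cands \<Delta> \<theta>" and mx: "\<not> (\<exists>\<Gamma>'\<in>lex_cands \<Delta> \<theta>. lex_less Ps \<Gamma> \<Gamma>')"
      obtain w where w: "w \<in> Sof \<theta>" "\<Gamma> \<subseteq> G w" using \<Gamma> cands[of \<Gamma>] by blast
      have eq: "\<Gamma> = G w"
      proof (rule ccontr)
        assume "\<Gamma> \<noteq> G w"
        then have "lex_less Ps \<Gamma> (G w)" using strict[OF w(2)] by blast
        then show False using mx Gc[OF w(1)] by blast
      qed
      show "entails (imps \<Gamma> \<union> {\<theta>}) \<phi>" unfolding entails_def
      proof
        fix u assume u: "u \<in> (\<Inter>x\<in>imps \<Gamma> \<union> {\<theta>}. Sof x)"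
        have uS: "u \<in> Sof \<theta>" using u by auto
        have sub: "G w \<subseteq> G u"
        proof
          fix d assume d: "d \<in> G w"
          then have "Imp (fst d) (snd d) \<in> imps \<Gamma>" using eq unfolding imps_def by force
          then have "sat u (Imp (fst d) (snd d))" using u unfolding Sof_def by blast
          then show "d \<in> G u" using d unfolding G_def satd_def by simp
        qed
        have eq2: "G w = G u"
        proof (rule ccontr)
          assume "G w \<noteq> G u"
          then have "lex_less Ps (G w) (G u)" using strict[OF sub] by blast
          then show False using mx Gc[OF uS] eq by blast
        qed
        have "\<forall>v\<in>Sof \<theta>. \<not> lex_less Ps (G u) (G v)"
        proof
          fix v assume "v \<in> Sof \<theta>"
          then have "G v \<in> lex_cands \<Delta> \<theta>" by (rule Gc)
          then show "\<not> lex_less Ps (G u) (G v)" using mx eq eq2 by metis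
        qed
        then show "u \<in> Sof \<phi>" using R uS unfolding Sof_def by blast
      qed
    qed
  qed
  then show ?thesis unfolding G_def .
qed

theorem theorem2:
  fixes \<Delta> :: "('v::finite) default set"
    and Ps :: "'v default set list"
  assumes "finite \<Delta>"
    and "consistent (imps \<Delta>)"
    and "is_Zpartition \<Delta> Ps"
  shows "\<forall>\<theta> \<phi>. lex_entails \<Delta> Ps \<theta> \<phi> \<longleftrightarrow>
           seq_entails (foldl seq_rev [UNIV] (map (\<lambda>D. Useq (imps D)) Ps)) \<theta> \<phi>"
proof (intro allI)
  fix \<theta> \<phi> :: "'v form"
  have cov: "(\<Union>i<length Ps. Ps ! i) = \<Delta>"
  proof -
    have "prefix_union Ps (length Ps) = \<Delta>"
      using assms(3) unfolding is_Zpartition_def by (elim conjE) assumption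
    then show ?thesis unfolding prefix_union_def .
  qed
  have sub: "\<forall>D\<in>set Ps. D \<subseteq> \<Delta>"
  proof
    fix D assume "D \<in> set Ps"
    then obtain i where "i < length Ps" "D = Ps ! i" by (auto simp: in_set_conv_nth)
    then show "D \<subseteq> \<Delta>" using cov by blast
  qed
  have ok: "\<forall>D\<in>set Ps. finite D \<and> consistent (imps D)"
  proof
    fix D assume "D \<in> set Ps"
    then have "D \<subseteq> \<Delta>" using sub by blast
    have "finite D" using \<open>D \<subseteq> \<Delta>\<close> assms(1) by (rule finite_subset)
    moreover have "imps D \<subseteq> imps \<Delta>" using \<open>D \<subseteq> \<Delta>\<close> unfolding imps_def by (rule image_mono)
    then have "consistent (imps D)" using assms(2) unfolding consistent_iff by blast
    ultimately show "finite D \<and> consistent (imps D)" by simp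
  qed
  define R where "R = foldl seq_rev [UNIV] (map (\<lambda>D. Useq (imps D)) Ps)"
  obtain pos where
    p1: "\<forall>w. pos w < length R" and
    p2: "\<forall>w p. p < length R \<longrightarrow> (w \<in> R ! p \<longleftrightarrow> p = pos w)" and
    p3: "\<forall>w v. pos w < pos v \<longleftrightarrow> lexv (length Ps) (\<lambda>i. cnt (Ps!i) v) (\<lambda>i. cnt (Ps!i) w)"
    using seq_lemma[OF ok] unfolding R_def by blast
  have cntG: "cnt (Ps!i) w = card ({d\<in>\<Delta>. satd w d} \<inter> Ps!i)" if "i < length Ps" for i w
  proof -
    have "Ps!i \<subseteq> \<Delta>" using sub that by auto
    then have "{d\<in>Ps!i. satd w d} = {d\<in>\<Delta>. satd w d} \<inter> Ps!i" by auto
    then show ?thesis unfolding cnt_def by simp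
  qed
  have ord: "pos w \<le> pos v \<longleftrightarrow> \<not> lex_less Ps {d\<in>\<Delta>. satd w d} {d\<in>\<Delta>. satd v d}" for w v
  proof -
    have "pos w \<le> pos v \<longleftrightarrow> \<not> pos v < pos w" by auto
    also have "\<dots> \<longleftrightarrow> \<not> lexv (length Ps) (\<lambda>i. cnt (Ps!i) w) (\<lambda>i. cnt (Ps!i) v)" using p3 by simp
    also have "lexv (length Ps) (\<lambda>i. cnt (Ps!i) w) (\<lambda>i. cnt (Ps!i) v) \<longleftrightarrow>
       lex_less Ps {d\<in>\<Delta>. satd w d} {d\<in>\<Delta>. satd v d}"
      unfolding lex_less_lexv by (rule lexv_cong) (auto simp: cntG)
    finally show ?thesis .
  qed
  show "lex_entails \<Delta> Ps \<theta> \<phi> \<longleftrightarrow> seq_entails (foldl seq_rev [UNIV] (map (\<lambda>D. Useq (imps D)) Ps)) \<theta> \<phi>"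
    unfolding R_def[symmetric] seq_pos[OF p1 p2] lex_side[OF assms(1) cov] ord ..
qed

end
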